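(* Let $T\ge 1$ and, for $t=1,\dots,T$, let $X_t\in\mathbb{R}^{n_t\times p}$ be random design matrices, and let $y_t=X_t\beta+\epsilon_t$, where $\beta\in\mathbb{R}^p$ is deterministic and the noise vectors $\epsilon_t\in\mathbb{R}^{n_t}$ have entries (across all $t$) that are i.i.d. with mean $0$ and variance $\sigma^2$, independent of $X=(X_1^\top,\dots,X_T^\top)^\top$. Let $\lambda_1,\dots,\lambda_T>0$, $\hat\Sigma_t=\frac{1}{n_t}X_t^\top X_t$, $A_t=\lambda_t(\hat\Sigma_t+\lambda_t I_p)^{-1}$, and let $\hat\beta_T$ be the continual ridge estimator (defined in the context). Then for any positive semidefinite $\Sigma_0\in\mathbb{R}^{p\times p}$, $$B_X(\hat\beta_T;\beta,\Sigma_0)=\beta^\top A_1A_2\cdots A_T\Sigma_0A_T\cdots A_2A_1\beta,$$ $$V_X(\hat\beta_T;\beta,\Sigma_0)=\sigma^2\sum_{t=1}^T\frac{1}{\lambda_t n_t}\mathrm{Tr}\big[A_TA_{T-1}\cdots A_{t+1}(A_t-A_t^2)A_{t+1}\cdots A_{T-1}A_T\Sigma_0\big],$$ with the convention that an empty matrix product equals $I_p$.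
   Context: Continual ridge estimator: $\hat\beta_0=0$ and for $t=1,\dots,T$, $\hat\beta_t=\arg\min_{b\in\mathbb{R}^p}\{\frac{1}{n_t}\|X_tb-y_t\|^2+\lambda_t\|b-\hat\beta_{t-1}\|^2\}$; equivalently $\hat\beta_t=(\hat\Sigma_t+\lambda_tI_p)^{-1}\frac{1}{n_t}X_t^\top y_t+A_t\hat\beta_{t-1}$. For an estimator $\hat\beta$ and a positive semidefinite matrix $\Sigma_0$, the bias and variance terms are $B_X(\hat\beta;\beta,\Sigma_0)=(\mathbb{E}(\hat\beta\mid X)-\beta)^\top\Sigma_0(\mathbb{E}(\hat\beta\mid X)-\beta)$ and $V_X(\hat\beta;\beta,\Sigma_0)=\mathrm{Tr}(\mathrm{Cov}(\hat\beta\mid X)\Sigma_0)$. *)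

theory Defs
  imports "HOL-Analysis.Analysis" "HOL-Probability.Probability"
begin

text \<open>Design matrices: X t i is the i-th row (i < n t) of the n_t x p matrix X_t.
  p x p matrices are real^'p^'p.\<close>

definition outer_prod :: "real^'p \<Rightarrow> real^'p \<Rightarrow> real^'p^'p" where
  "outer_prod u v = (\<chi> i j. u $ i * v $ j)"

definition Sigma_hat :: "(nat \<Rightarrow> nat \<Rightarrow> real^'p) \<Rightarrow> (nat \<Rightarrow> nat) \<Rightarrow> nat \<Rightarrow> real^'p^'p" where
  "Sigma_hat X n t = (1 / real (n t)) *\<^sub>R (\<Sum>i<n t. outer_prod (X t i) (X t i))"

definition A_mat :: "(nat \<Rightarrow> real) \<Rightarrow> (nat \<Rightarrow> nat \<Rightarrow> real^'p) \<Rightarrow> (nat \<Rightarrow> nat) \<Rightarrow> nat \<Rightarrow> real^'p^'p" where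
  "A_mat lam X n t = lam t *\<^sub>R matrix_inv (Sigma_hat X n t + lam t *\<^sub>R mat 1)"

definition XTy :: "(nat \<Rightarrow> nat \<Rightarrow> real^'p) \<Rightarrow> (nat \<Rightarrow> nat) \<Rightarrow> nat \<Rightarrow> (nat \<Rightarrow> real) \<Rightarrow> real^'p" where
  "XTy X n t yt = (1 / real (n t)) *\<^sub>R (\<Sum>i<n t. yt i *\<^sub>R X t i)"

text \<open>Continual ridge estimator hat beta_t (closed form from the context), t = 0,1,2,...;
  y t i is the i-th response of task t.\<close>
primrec cridge :: "(nat \<Rightarrow> real) \<Rightarrow> (nat \<Rightarrow> nat \<Rightarrow> real^'p) \<Rightarrow> (nat \<Rightarrow> nat) \<Rightarrow> (nat \<Rightarrow> nat \<Rightarrow> real) \<Rightarrow> nat \<Rightarrow> real^'p" where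
  "cridge lam X n y 0 = 0"
| "cridge lam X n y (Suc t) =
     matrix_inv (Sigma_hat X n (Suc t) + lam (Suc t) *\<^sub>R mat 1) *v XTy X n (Suc t) (y (Suc t))
     + A_mat lam X n (Suc t) *v cridge lam X n y t"

definition mprod :: "(nat \<Rightarrow> real^'p^'p) \<Rightarrow> nat list \<Rightarrow> real^'p^'p" where
  "mprod M ks = foldr (\<lambda>k P. M k ** P) ks (mat 1)"

text \<open>Bias and variance terms for a random vector estimator bh on probability space M
  (conditional on the design, which is held fixed here).\<close>
definition mean_vec :: "'a measure \<Rightarrow> ('a \<Rightarrow> real^'p) \<Rightarrow> real^'p" where
  "mean_vec M bh = (\<chi> j. integral\<^sup>L M (\<lambda>\<omega>. bh \<omega> $ j))"

definition cov_mat :: "'a measure \<Rightarrow> ('a \<Rightarrow> real^'p) \<Rightarrow> real^'p^'p" where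
  "cov_mat M bh = (\<chi> j k. integral\<^sup>L M (\<lambda>\<omega>. (bh \<omega> $ j - mean_vec M bh $ j) * (bh \<omega> $ k - mean_vec M bh $ k)))"

definition bias_term :: "'a measure \<Rightarrow> ('a \<Rightarrow> real^'p) \<Rightarrow> real^'p \<Rightarrow> real^'p^'p \<Rightarrow> real" where
  "bias_term M bh \<beta> S0 = (mean_vec M bh - \<beta>) \<bullet> (S0 *v (mean_vec M bh - \<beta>))"

definition var_term :: "'a measure \<Rightarrow> ('a \<Rightarrow> real^'p) \<Rightarrow> real^'p^'p \<Rightarrow> real" where
  "var_term M bh S0 = trace (cov_mat M bh ** S0)"

end

theory Submission
  imports Defs
begin

lemma indep_pair:
  assumes "prob_space M" "prob_space.indep_vars M (\<lambda>_. borel) Y I" "k \<in> I" "l \<in> I" "k \<noteq> l"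
  shows "prob_space.indep_var M borel (Y k) borel (Y l)"
proof -
  interpret prob_space M by fact
  have "indep_var borel ((\<lambda>f. f k) \<circ> (\<lambda>\<omega>. restrict (\<lambda>i. Y i \<omega>) {k}))
                  borel ((\<lambda>f. f l) \<circ> (\<lambda>\<omega>. restrict (\<lambda>i. Y i \<omega>) {l}))"
    using assms by (intro indep_var_compose[OF indep_var_restrict[OF assms(2)]]) auto
  also have "((\<lambda>f. f k) \<circ> (\<lambda>\<omega>. restrict (\<lambda>i. Y i \<omega>) {k})) = Y k" by auto
  also have "((\<lambda>f. f l) \<circ> (\<lambda>\<omega>. restrict (\<lambda>i. Y i \<omega>) {l})) = Y l" by auto
  finally show ?thesis .
qed

lemma lin_moments:
  fixes w :: "'k \<Rightarrow> real^'p" and c :: "real^'p"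
  assumes "prob_space M" "finite K"
    and int: "\<And>k l. k \<in> K \<Longrightarrow> l \<in> K \<Longrightarrow> integrable M (\<lambda>\<omega>. e k \<omega> * e l \<omega>)"
    and int1: "\<And>k. k \<in> K \<Longrightarrow> integrable M (e k)"
    and m0: "\<And>k. k \<in> K \<Longrightarrow> integral\<^sup>L M (e k) = 0"
    and m2: "\<And>k l. k \<in> K \<Longrightarrow> l \<in> K \<Longrightarrow> integral\<^sup>L M (\<lambda>\<omega>. e k \<omega> * e l \<omega>) = (if k = l then s else 0)"
  shows "mean_vec M (\<lambda>\<omega>. c + (\<Sum>k\<in>K. e k \<omega> *\<^sub>R w k)) = c"
    and "cov_mat M (\<lambda>\<omega>. c + (\<Sum>k\<in>K. e k \<omega> *\<^sub>R w k)) = s *\<^sub>R (\<Sum>k\<in>K. outer_prod (w k) (w k))"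
proof -
  interpret prob_space M by fact
  have mv: "mean_vec M (\<lambda>\<omega>. c + (\<Sum>k\<in>K. e k \<omega> *\<^sub>R w k)) = c"
  proof -
    have "integral\<^sup>L M (\<lambda>\<omega>. c $ j + (\<Sum>k\<in>K. e k \<omega> * w k $ j)) = c $ j" for j
    proof -
      have "integral\<^sup>L M (\<lambda>\<omega>. c $ j + (\<Sum>k\<in>K. e k \<omega> * w k $ j))
          = integral\<^sup>L M (\<lambda>\<omega>. c $ j) + integral\<^sup>L M (\<lambda>\<omega>. \<Sum>k\<in>K. e k \<omega> * w k $ j)"
        using int1 by (subst Bochner_Integration.integral_add) auto
      also have "integral\<^sup>L M (\<lambda>\<omega>. \<Sum>k\<in>K. e k \<omega> * w k $ j) = (\<Sum>k\<in>K. integral\<^sup>L M (\<lambda>\<omega>. e k \<omega> * w k $ j))"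
        using int1 by (subst Bochner_Integration.integral_sum) auto
      also have "\<dots> = 0" using m0 by simp
      finally show ?thesis by (simp add: prob_space)
    qed
    then show ?thesis unfolding mean_vec_def by (simp add: vec_eq_iff sum_component)
  qed
  show "mean_vec M (\<lambda>\<omega>. c + (\<Sum>k\<in>K. e k \<omega> *\<^sub>R w k)) = c" by (fact mv)
  have "integral\<^sup>L M (\<lambda>\<omega>. (\<Sum>k\<in>K. e k \<omega> * w k $ j) * (\<Sum>l\<in>K. e l \<omega> * w l $ m))
        = s * (\<Sum>k\<in>K. w k $ j * w k $ m)" for j m
  proof -
    have "integral\<^sup>L M (\<lambda>\<omega>. (\<Sum>k\<in>K. e k \<omega> * w k $ j) * (\<Sum>l\<in>K. e l \<omega> * w l $ m))
        = integral\<^sup>L M (\<lambda>\<omega>. \<Sum>k\<in>K. \<Sum>l\<in>K. (w k $ j * w l $ m) * (e k \<omega> * e l \<omega>))"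
      by (simp add: sum_product mult_ac)
    also have "\<dots> = (\<Sum>k\<in>K. \<Sum>l\<in>K. (w k $ j * w l $ m) * integral\<^sup>L M (\<lambda>\<omega>. e k \<omega> * e l \<omega>))"
      using int by (subst Bochner_Integration.integral_sum, simp, intro sum.cong refl, subst Bochner_Integration.integral_sum) auto
    also have "\<dots> = (\<Sum>k\<in>K. \<Sum>l\<in>K. if l = k then (w k $ j * w l $ m) * s else 0)"
      using m2 by (intro sum.cong) auto
    also have "\<dots> = s * (\<Sum>k\<in>K. w k $ j * w k $ m)"
      using \<open>finite K\<close> by (simp add: sum.delta sum_distrib_left mult_ac)
    finally show ?thesis .
  qed
  then show "cov_mat M (\<lambda>\<omega>. c + (\<Sum>k\<in>K. e k \<omega> *\<^sub>R w k)) = s *\<^sub>R (\<Sum>k\<in>K. outer_prod (w k) (w k))"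
    unfolding cov_mat_def mv by (simp add: vec_eq_iff sum_component outer_prod_def)
qed


lemma mm_add_r: "((A::real^'n^'m) + B) ** (C::real^'k^'n) = A ** C + B ** C"
  by (vector matrix_matrix_mult_def sum.distrib distrib_right)
lemma mm_diff_r: "((A::real^'n^'m) - B) ** (C::real^'k^'n) = A ** C - B ** C"
  by (vector matrix_matrix_mult_def sum_subtractf left_diff_distrib)
lemma mm_diff_l: "(A::real^'n^'m) ** (B - C) = A ** B - A ** (C::real^'k^'n)"
  by (vector matrix_matrix_mult_def sum_subtractf right_diff_distrib)
lemma mm_scale_l: "(k *\<^sub>R (A::real^'n^'m)) ** (B::real^'k^'n) = k *\<^sub>R (A ** B)"
  by (simp add: scalar_matrix_assoc)
lemma mm_scale_r: "(A::real^'n^'m) ** (k *\<^sub>R (B::real^'k^'n)) = k *\<^sub>R (A ** B)"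
  by (simp add: matrix_scalar_ac scalar_matrix_assoc)
lemma mv_scale_l: "(k *\<^sub>R (A::real^'n^'m)) *v x = k *\<^sub>R (A *v x)"
  by (vector matrix_vector_mult_def sum_distrib_left mult_ac)

lemma mm_sum_l: "(\<Sum>i\<in>S. f i) ** (B::real^'k^'n) = (\<Sum>i\<in>S. (f i :: real^'n^'m) ** B)"
  by (induction S rule: infinite_finite_induct) (auto simp: mm_add_r)
lemma mm_sum_r: "(B::real^'n^'m) ** (\<Sum>i\<in>S. f i) = (\<Sum>i\<in>S. B ** (f i :: real^'k^'n))"
  by (induction S rule: infinite_finite_induct) (auto simp: matrix_add_ldistrib)
lemma mv_sum_l: "(\<Sum>i\<in>S. f i) *v (x::real^'n) = (\<Sum>i\<in>S. (f i :: real^'n^'m) *v x)"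
  by (induction S rule: infinite_finite_induct) (auto simp: matrix_vector_mult_add_rdistrib)
lemma mv_sum_r: "(B::real^'n^'m) *v (\<Sum>i\<in>S. f i) = (\<Sum>i\<in>S. B *v f i)"
  by (induction S rule: infinite_finite_induct) (auto simp: matrix_vector_right_distrib)
lemma trace_sum': "trace (\<Sum>i\<in>S. (f i :: real^'n^'n)) = (\<Sum>i\<in>S. trace (f i))"
  by (induction S rule: infinite_finite_induct) (auto simp: trace_add trace_0[simplified])
lemma trace_scale: "trace (k *\<^sub>R (A::real^'n^'n)) = k * trace A"
  by (simp add: trace_def sum_distrib_left)
lemma transpose_add': "transpose ((A::real^'n^'m) + B) = transpose A + transpose B"
  by (simp add: transpose_def vec_eq_iff)
lemma transpose_diff': "transpose ((A::real^'n^'m) - B) = transpose A - transpose B"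
  by (simp add: transpose_def vec_eq_iff)
lemma transpose_sum': "transpose (\<Sum>i\<in>S. (f i :: real^'n^'m)) = (\<Sum>i\<in>S. transpose (f i))"
  by (induction S rule: infinite_finite_induct) (auto simp: transpose_add' transpose_def vec_eq_iff)

lemma outer_mv: "outer_prod u u *v (v::real^'p) = (u \<bullet> v) *\<^sub>R u"
  by (simp add: outer_prod_def matrix_vector_mult_def inner_vec_def vec_eq_iff sum_distrib_left mult_ac)

lemma outer_transpose: "transpose (outer_prod u (u::real^'p)) = outer_prod u u"
  by (simp add: outer_prod_def transpose_def vec_eq_iff mult.commute)

lemma outer_mult: "outer_prod (B *v u) (B *v u) = B ** outer_prod u u ** transpose (B::real^'p^'p)"
  by (simp add: outer_prod_def matrix_vector_mult_def matrix_matrix_mult_def transpose_def vec_eq_iff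
      sum_distrib_left sum_distrib_right mult_ac sum_product)

lemma outer_scale: "outer_prod (c *\<^sub>R u) (c *\<^sub>R u) = (c * c) *\<^sub>R outer_prod u (u::real^'p)"
  by (simp add: outer_prod_def vec_eq_iff mult_ac)

lemma inv_props:
  fixes G :: "real^'p^'p"
  assumes "invertible G"
  shows "G ** matrix_inv G = mat 1" "matrix_inv G ** G = mat 1"
proof -
  have "\<exists>A'. G ** A' = mat 1 \<and> A' ** G = mat 1" using assms by (simp add: invertible_def)
  then have "G ** matrix_inv G = mat 1 \<and> matrix_inv G ** G = mat 1"
    unfolding matrix_inv_def by (rule someI_ex)
  then show "G ** matrix_inv G = mat 1" "matrix_inv G ** G = mat 1" by auto
qed

lemma inv_sym:
  fixes G :: "real^'p^'p"
  assumes "invertible G" "transpose G = G"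
  shows "transpose (matrix_inv G) = matrix_inv G"
proof -
  have "transpose (matrix_inv G ** G) = mat 1" using inv_props[OF assms(1)] by simp
  then have h: "G ** transpose (matrix_inv G) = mat 1" using assms(2) by (simp add: matrix_transpose_mul)
  have "transpose (matrix_inv G) = (matrix_inv G ** G) ** transpose (matrix_inv G)"
    using inv_props[OF assms(1)] by simp
  also have "\<dots> = matrix_inv G" using h by (simp add: matrix_mul_assoc[symmetric])
  finally show ?thesis .
qed

lemma Sigma_hat_sym: "transpose (Sigma_hat X n t) = Sigma_hat X n t"
  by (simp add: Sigma_hat_def transpose_scalar transpose_sum' outer_transpose)

lemma Sigma_hat_mv: "Sigma_hat X n t *v v = (1 / real (n t)) *\<^sub>R (\<Sum>i<n t. (X t i \<bullet> v) *\<^sub>R X t i)"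
  by (simp add: Sigma_hat_def mv_scale_l mv_sum_l outer_mv)

lemma Sigma_hat_psd: "0 \<le> x \<bullet> (Sigma_hat X n t *v x)"
proof -
  have "x \<bullet> (Sigma_hat X n t *v x) = (1 / real (n t)) * (\<Sum>i<n t. (X t i \<bullet> x)\<^sup>2)"
    by (simp add: Sigma_hat_mv inner_sum_right power2_eq_square inner_commute)
  also have "\<dots> \<ge> 0" by (intro mult_nonneg_nonneg sum_nonneg) auto
  finally show ?thesis .
qed

lemma G_invertible:
  assumes "lam > 0"
  shows "invertible (Sigma_hat X n t + lam *\<^sub>R mat 1 :: real^'p^'p)"
proof -
  let ?G = "Sigma_hat X n t + lam *\<^sub>R mat 1 :: real^'p^'p"
  have z: "x = 0" if "?G *v x = 0" for x
  proof -
    have "0 = x \<bullet> (?G *v x)" using that by simp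
    also have "\<dots> = x \<bullet> (Sigma_hat X n t *v x) + lam * (x \<bullet> x)"
      by (simp add: matrix_vector_mult_add_rdistrib mv_scale_l inner_add_right)
    finally have "lam * (x \<bullet> x) \<le> 0" using Sigma_hat_psd[of x X n t] by linarith
    then have "x \<bullet> x \<le> 0" using assms by (simp add: mult_le_0_iff)
    then show "x = 0" by (metis inner_eq_zero_iff inner_ge_zero order_antisym)
  qed
  have "inj ((*v) ?G)"
  proof (rule injI)
    fix x y assume "?G *v x = ?G *v y"
    then have "?G *v (x - y) = 0" by (simp add: matrix_vector_mult_diff_distrib)
    then show "x = y" using z[of "x - y"] by simp
  qed
  then show ?thesis using matrix_left_invertible_injective invertible_left_inverse by blast
qed

lemma mprod_append: "mprod M (xs @ ys) = mprod M xs ** mprod M ys"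
  by (induction xs) (auto simp: mprod_def matrix_mul_assoc)

lemma mprod_transpose:
  assumes "\<And>k. k \<in> set ks \<Longrightarrow> transpose (M k) = M k"
  shows "transpose (mprod M ks) = mprod M (rev ks)"
  using assms
proof (induction ks)
  case Nil then show ?case by (simp add: mprod_def)
next
  case (Cons k ks)
  have "transpose (mprod M (k # ks)) = transpose (mprod M ks) ** transpose (M k)"
    by (simp add: mprod_def matrix_transpose_mul)
  also have "\<dots> = mprod M (rev ks) ** mprod M [k]"
    using Cons by (simp add: mprod_def)
  also have "\<dots> = mprod M (rev (k # ks))" by (simp add: mprod_append)
  finally show ?case .
qed


theorem lemma1:
  fixes M :: "'a measure"
    and T :: nat
    and n :: "nat \<Rightarrow> nat"
    and X :: "nat \<Rightarrow> nat \<Rightarrow> real^'p"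
    and \<beta> :: "real^'p"
    and \<epsilon> :: "nat \<Rightarrow> nat \<Rightarrow> 'a \<Rightarrow> real"
    and \<sigma> :: real
    and lam :: "nat \<Rightarrow> real"
    and \<Sigma>0 :: "real^'p^'p"
  defines "I \<equiv> {(t, i). 1 \<le> t \<and> t \<le> T \<and> i < n t}"
  assumes "prob_space M"
    and "T \<ge> 1"
    and "\<And>t. 1 \<le> t \<Longrightarrow> t \<le> T \<Longrightarrow> n t \<ge> 1"
    and "\<And>t. 1 \<le> t \<Longrightarrow> t \<le> T \<Longrightarrow> lam t > 0"
    and "\<And>t i. (t, i) \<in> I \<Longrightarrow> \<epsilon> t i \<in> borel_measurable M"
    and "prob_space.indep_vars M (\<lambda>_. borel) (\<lambda>(t, i). \<epsilon> t i) I"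
    and "\<And>t i s j. (t, i) \<in> I \<Longrightarrow> (s, j) \<in> I \<Longrightarrow> distr M borel (\<epsilon> t i) = distr M borel (\<epsilon> s j)"
    and "\<And>t i. (t, i) \<in> I \<Longrightarrow> integrable M (\<lambda>\<omega>. (\<epsilon> t i \<omega>)\<^sup>2)"
    and "\<And>t i. (t, i) \<in> I \<Longrightarrow> integral\<^sup>L M (\<epsilon> t i) = 0"
    and "\<And>t i. (t, i) \<in> I \<Longrightarrow> integral\<^sup>L M (\<lambda>\<omega>. (\<epsilon> t i \<omega>)\<^sup>2) = \<sigma>\<^sup>2"
    and "transpose \<Sigma>0 = \<Sigma>0"
    and "\<And>x. x \<bullet> (\<Sigma>0 *v x) \<ge> 0"
  shows "(bias_term M (\<lambda>\<omega>. cridge lam X n (\<lambda>t i. X t i \<bullet> \<beta> + \<epsilon> t i \<omega>) T) \<beta> \<Sigma>0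
           = \<beta> \<bullet> ((mprod (A_mat lam X n) [1..<T+1] ** \<Sigma>0 ** mprod (A_mat lam X n) (rev [1..<T+1])) *v \<beta>)) \<and>
         (var_term M (\<lambda>\<omega>. cridge lam X n (\<lambda>t i. X t i \<bullet> \<beta> + \<epsilon> t i \<omega>) T) \<Sigma>0
           = \<sigma>\<^sup>2 * (\<Sum>t = 1..T. 1 / (lam t * real (n t)) *
               trace (mprod (A_mat lam X n) (rev [t+1..<T+1])
                      ** (A_mat lam X n t - A_mat lam X n t ** A_mat lam X n t)
                      ** mprod (A_mat lam X n) [t+1..<T+1] ** \<Sigma>0)))"
proof -
  note prob = assms(2) and npos = assms(4) and lpos = assms(5) and meas = assms(6)
    and ind = assms(7) and sq = assms(9) and m0 = assms(10) and m2 = assms(11)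
  interpret prob_space M by fact
  define AA where "AA = A_mat lam X n"
  define S where "S t = Sigma_hat X n t" for t
  define R where "R t = matrix_inv (Sigma_hat X n t + lam t *\<^sub>R mat 1)" for t
  define Q where "Q a t = mprod AA (rev [a..<t+1])" for a t
  define W where "W s i t = (1 / real (n s)) *\<^sub>R (Q (s+1) t *v (R s *v X s i))" for s i t
  have RG: "R t ** (S t + lam t *\<^sub>R mat 1) = mat 1" if "1 \<le> t" "t \<le> T" for t
    using inv_props(2)[OF G_invertible[OF lpos[OF that]]] by (simp add: R_def S_def)
  have RS: "R t ** S t = mat 1 - lam t *\<^sub>R R t" if "1 \<le> t" "t \<le> T" for t
    using RG[OF that] by (simp add: matrix_add_ldistrib mm_scale_r algebra_simps)
  have Rsym: "transpose (R t) = R t" if "1 \<le> t" "t \<le> T" for t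
    unfolding R_def
    by (rule inv_sym[OF G_invertible[OF lpos[OF that]]])
       (simp add: transpose_add' transpose_scalar Sigma_hat_sym)
  have AAR: "AA t = lam t *\<^sub>R R t" for t by (simp add: AA_def A_mat_def R_def)
  have AAsym: "transpose (AA t) = AA t" if "1 \<le> t" "t \<le> T" for t
    using Rsym[OF that] by (simp add: AAR transpose_scalar)
  have Qstep: "Q a (Suc t) = AA (Suc t) ** Q a t" if "a \<le> Suc t" for a t
  proof -
    have "[a..<Suc t + 1] = [a..<t+1] @ [Suc t]" using that by simp
    then show ?thesis by (simp add: Q_def mprod_def)
  qed
  have Qnil: "Q (Suc t) t = mat 1" for t by (simp add: Q_def mprod_def)
  have cl: "cridge lam X n (\<lambda>t i. X t i \<bullet> \<beta> + \<epsilon> t i \<omega>) t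
      = (\<beta> - Q 1 t *v \<beta>) + (\<Sum>s\<in>{1..t}. \<Sum>i<n s. \<epsilon> s i \<omega> *\<^sub>R W s i t)" if "t \<le> T" for t \<omega>
    using that
  proof (induction t)
    case 0
    then show ?case by (simp add: Q_def mprod_def)
  next
    case (Suc t)
    define u where "u = Suc t"
    have u1: "1 \<le> u" "u \<le> T" using Suc.prems by (auto simp: u_def)
    have IH: "cridge lam X n (\<lambda>t i. X t i \<bullet> \<beta> + \<epsilon> t i \<omega>) t
      = (\<beta> - Q 1 t *v \<beta>) + (\<Sum>s\<in>{1..t}. \<Sum>i<n s. \<epsilon> s i \<omega> *\<^sub>R W s i t)"
      using Suc by simp
    have xty: "XTy X n u (\<lambda>i. X u i \<bullet> \<beta> + \<epsilon> u i \<omega>)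
        = S u *v \<beta> + (\<Sum>i<n u. \<epsilon> u i \<omega> *\<^sub>R ((1 / real (n u)) *\<^sub>R X u i))"
      by (simp add: XTy_def S_def Sigma_hat_mv scaleR_add_left sum.distrib scaleR_add_right
          scaleR_sum_right inner_commute)
    have p1: "R u *v XTy X n u (\<lambda>i. X u i \<bullet> \<beta> + \<epsilon> u i \<omega>)
        = \<beta> - lam u *\<^sub>R (R u *v \<beta>) + (\<Sum>i<n u. \<epsilon> u i \<omega> *\<^sub>R W u i u)"
    proof -
      have "R u *v (S u *v \<beta>) = \<beta> - lam u *\<^sub>R (R u *v \<beta>)"
        by (simp add: matrix_vector_mul_assoc RS[OF u1] matrix_vector_mult_diff_rdistrib mv_scale_l)
      moreover have "R u *v (\<Sum>i<n u. \<epsilon> u i \<omega> *\<^sub>R ((1 / real (n u)) *\<^sub>R X u i))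
          = (\<Sum>i<n u. \<epsilon> u i \<omega> *\<^sub>R W u i u)"
        by (simp add: mv_sum_r matrix_vector_mult_scaleR W_def Qnil u_def)
      ultimately show ?thesis by (simp add: xty matrix_vector_right_distrib)
    qed
    have p2: "AA u *v cridge lam X n (\<lambda>t i. X t i \<bullet> \<beta> + \<epsilon> t i \<omega>) t
       = lam u *\<^sub>R (R u *v \<beta>) - Q 1 u *v \<beta> + (\<Sum>s\<in>{1..t}. \<Sum>i<n s. \<epsilon> s i \<omega> *\<^sub>R W s i u)"
    proof -
      have "AA u *v (\<Sum>s\<in>{1..t}. \<Sum>i<n s. \<epsilon> s i \<omega> *\<^sub>R W s i t)
          = (\<Sum>s\<in>{1..t}. \<Sum>i<n s. \<epsilon> s i \<omega> *\<^sub>R W s i u)"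
        by (auto simp: mv_sum_r matrix_vector_mult_scaleR W_def u_def Qstep matrix_vector_mul_assoc matrix_mul_assoc
            intro!: sum.cong)
      moreover have "AA u *v (Q 1 t *v \<beta>) = Q 1 u *v \<beta>"
        by (simp add: u_def Qstep matrix_vector_mul_assoc)
      ultimately show ?thesis
        by (simp add: IH matrix_vector_right_distrib matrix_vector_mult_diff_distrib AAR mv_scale_l)
    qed
    have "cridge lam X n (\<lambda>t i. X t i \<bullet> \<beta> + \<epsilon> t i \<omega>) u
        = R u *v XTy X n u (\<lambda>i. X u i \<bullet> \<beta> + \<epsilon> u i \<omega>)
          + AA u *v cridge lam X n (\<lambda>t i. X t i \<bullet> \<beta> + \<epsilon> t i \<omega>) t"
      by (simp add: u_def R_def AA_def)
    also have "\<dots> = (\<beta> - Q 1 u *v \<beta>) + ((\<Sum>s\<in>{1..t}. \<Sum>i<n s. \<epsilon> s i \<omega> *\<^sub>R W s i u)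
          + (\<Sum>i<n u. \<epsilon> u i \<omega> *\<^sub>R W u i u))"
      unfolding p1 p2 by (simp add: algebra_simps)
    also have "\<dots> = (\<beta> - Q 1 u *v \<beta>) + (\<Sum>s\<in>{1..u}. \<Sum>i<n s. \<epsilon> s i \<omega> *\<^sub>R W s i u)"
      by (simp add: u_def sum.cl_ivl_Suc)
    finally show ?case by (simp add: u_def)
  qed

  have Ieq: "I = Sigma {1..T} (\<lambda>s. {..<n s})" by (auto simp: I_def)
  have finI: "finite I" by (simp add: Ieq)
  define e where "e k \<omega> = \<epsilon> (fst k) (snd k) \<omega>" for k \<omega>
  define w where "w k = W (fst k) (snd k) T" for k
  define c where "c = \<beta> - Q 1 T *v \<beta>"
  have bh: "(\<lambda>\<omega>. cridge lam X n (\<lambda>t i. X t i \<bullet> \<beta> + \<epsilon> t i \<omega>) T)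
      = (\<lambda>\<omega>. c + (\<Sum>k\<in>I. e k \<omega> *\<^sub>R w k))"
  proof
    fix \<omega>
    have "(\<Sum>s\<in>{1..T}. \<Sum>i<n s. \<epsilon> s i \<omega> *\<^sub>R W s i T) = (\<Sum>(s,i)\<in>I. \<epsilon> s i \<omega> *\<^sub>R W s i T)"
      unfolding Ieq by (rule sum.Sigma) auto
    also have "\<dots> = (\<Sum>k\<in>I. e k \<omega> *\<^sub>R w k)" by (simp add: e_def w_def case_prod_beta')
    finally show "cridge lam X n (\<lambda>t i. X t i \<bullet> \<beta> + \<epsilon> t i \<omega>) T = c + (\<Sum>k\<in>I. e k \<omega> *\<^sub>R w k)"
      using cl[of T \<omega>] by (simp add: c_def)
  qed
  have Iprops: "1 \<le> fst k" "fst k \<le> T" "snd k < n (fst k)" "(fst k, snd k) \<in> I" if "k \<in> I" for k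
    using that by (auto simp: I_def)
  have int1: "integrable M (e k)" if "k \<in> I" for k
    unfolding e_def
    by (rule square_integrable_imp_integrable[OF meas sq]) (use Iprops[OF that] in auto)
  have me0: "integral\<^sup>L M (e k) = 0" if "k \<in> I" for k
    unfolding e_def using m0 Iprops[OF that] by auto
  have prod: "integrable M (\<lambda>\<omega>. e k \<omega> * e l \<omega>) \<and>
      integral\<^sup>L M (\<lambda>\<omega>. e k \<omega> * e l \<omega>) = (if k = l then \<sigma>\<^sup>2 else 0)" if "k \<in> I" "l \<in> I" for k l
  proof (cases "k = l")
    case True
    then show ?thesis using sq m2 Iprops[OF that(1)] by (simp add: e_def power2_eq_square)
  next
    case False
    have iv: "indep_var borel ((\<lambda>(t, i). \<epsilon> t i) k) borel ((\<lambda>(t, i). \<epsilon> t i) l)"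
      by (rule indep_pair[OF prob ind that False])
    have eeq: "e = (\<lambda>k. \<epsilon> (fst k) (snd k))" by (simp add: e_def fun_eq_iff)
    have iv': "indep_var borel (e k) borel (e l)"
      using iv by (simp add: eeq case_prod_beta')
    show ?thesis using False indep_var_integrable[OF iv' int1 int1] indep_var_lebesgue_integral[OF iv' int1 int1]
      me0 that by simp
  qed
  note LM = lin_moments[OF prob finI, of e, OF _ int1 me0, where s="\<sigma>\<^sup>2" and c=c and w=w]
  have mean: "mean_vec M (\<lambda>\<omega>. c + (\<Sum>k\<in>I. e k \<omega> *\<^sub>R w k)) = c"
    by (rule LM(1)) (use prod in auto)
  have cov: "cov_mat M (\<lambda>\<omega>. c + (\<Sum>k\<in>I. e k \<omega> *\<^sub>R w k)) = \<sigma>\<^sup>2 *\<^sub>R (\<Sum>k\<in>I. outer_prod (w k) (w k))"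
    by (rule LM(2)) (use prod in auto)
  have QT: "transpose (Q a T) = mprod AA [a..<T+1]" if "1 \<le> a" for a
    unfolding Q_def using that by (subst mprod_transpose) (auto intro!: AAsym)
  have bias: "bias_term M (\<lambda>\<omega>. cridge lam X n (\<lambda>t i. X t i \<bullet> \<beta> + \<epsilon> t i \<omega>) T) \<beta> \<Sigma>0
           = \<beta> \<bullet> ((mprod (A_mat lam X n) [1..<T+1] ** \<Sigma>0 ** mprod (A_mat lam X n) (rev [1..<T+1])) *v \<beta>)"
  proof -
    define v where "v = Q 1 T *v \<beta>"
    have neg: "\<Sigma>0 *v (- v) = - (\<Sigma>0 *v v)"
      using matrix_vector_mult_diff_distrib[of \<Sigma>0 0 v] by simp
    have cb: "c - \<beta> = - v" by (simp add: c_def v_def)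
    have "bias_term M (\<lambda>\<omega>. cridge lam X n (\<lambda>t i. X t i \<bullet> \<beta> + \<epsilon> t i \<omega>) T) \<beta> \<Sigma>0 = v \<bullet> (\<Sigma>0 *v v)"
      unfolding bh bias_term_def mean cb neg by simp
    also have "\<dots> = \<beta> \<bullet> (transpose (Q 1 T) *v (\<Sigma>0 *v v))"
    proof -
      have "\<beta> \<bullet> (transpose (Q 1 T) *v (\<Sigma>0 *v v)) = ((\<Sigma>0 *v v) v* Q 1 T) \<bullet> \<beta>"
        by (simp add: inner_commute)
      also have "\<dots> = (\<Sigma>0 *v v) \<bullet> (Q 1 T *v \<beta>)" by (rule dot_lmul_matrix)
      finally show ?thesis by (simp add: v_def inner_commute)
    qed
    also have "\<dots> = \<beta> \<bullet> ((mprod (A_mat lam X n) [1..<T+1] ** \<Sigma>0 ** mprod (A_mat lam X n) (rev [1..<T+1])) *v \<beta>)"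
      unfolding QT[OF order_refl] v_def by (simp only: matrix_vector_mul_assoc matrix_mul_assoc AA_def Q_def)
    finally show ?thesis .
  qed

  have blk: "(\<Sum>i<n t. outer_prod (W t i T) (W t i T))
      = (1 / (lam t * real (n t))) *\<^sub>R (Q (t+1) T ** (AA t - AA t ** AA t) ** mprod AA [t+1..<T+1])"
    if t1: "1 \<le> t" "t \<le> T" for t
  proof -
    define P where "P = Q (t+1) T"
    define B where "B = P ** R t"
    have nt: "real (n t) > 0" using npos[OF t1] by simp
    have lt: "lam t > 0" using lpos[OF t1] .
    have Wt: "W t i T = (1 / real (n t)) *\<^sub>R (B *v X t i)" for i
      by (simp add: W_def B_def P_def matrix_vector_mul_assoc)
    have so: "(\<Sum>i<n t. outer_prod (X t i) (X t i)) = real (n t) *\<^sub>R S t"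
      using nt by (simp add: S_def Sigma_hat_def)
    have "(\<Sum>i<n t. outer_prod (W t i T) (W t i T))
        = (\<Sum>i<n t. ((1 / real (n t)) * (1 / real (n t))) *\<^sub>R (B ** outer_prod (X t i) (X t i) ** transpose B))"
      by (simp add: Wt outer_scale outer_mult)
    also have "\<dots> = ((1 / real (n t)) * (1 / real (n t))) *\<^sub>R (B ** (\<Sum>i<n t. outer_prod (X t i) (X t i)) ** transpose B)"
      by (simp add: scaleR_sum_right mm_sum_l mm_sum_r)
    also have "\<dots> = (1 / real (n t)) *\<^sub>R (B ** S t ** transpose B)"
      using nt by (simp add: so mm_scale_l mm_scale_r)
    finally have e1: "(\<Sum>i<n t. outer_prod (W t i T) (W t i T)) = (1 / real (n t)) *\<^sub>R (B ** S t ** transpose B)" .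
    have e2: "B ** S t ** transpose B = P ** (R t ** S t ** R t) ** mprod AA [t+1..<T+1]"
      using t1 by (simp add: B_def matrix_transpose_mul Rsym QT P_def matrix_mul_assoc)
    have e3: "R t ** S t ** R t = (1 / lam t) *\<^sub>R (AA t - AA t ** AA t)"
    proof -
      have "R t ** S t ** R t = R t - lam t *\<^sub>R (R t ** R t)"
        by (simp add: RS[OF t1] mm_diff_r mm_scale_l)
      moreover have "AA t - AA t ** AA t = lam t *\<^sub>R R t - (lam t * lam t) *\<^sub>R (R t ** R t)"
        by (simp add: AAR mm_scale_l mm_scale_r)
      ultimately show ?thesis using lt by (simp add: scaleR_diff_right)
    qed
    show ?thesis
      unfolding e1 e2 e3 P_def using lt nt
      by (simp add: mm_scale_l mm_scale_r matrix_mul_assoc)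
  qed
  have sumI: "(\<Sum>k\<in>I. outer_prod (w k) (w k)) = (\<Sum>t\<in>{1..T}. \<Sum>i<n t. outer_prod (W t i T) (W t i T))"
  proof -
    have "(\<Sum>t\<in>{1..T}. \<Sum>i<n t. outer_prod (W t i T) (W t i T)) = (\<Sum>(t,i)\<in>I. outer_prod (W t i T) (W t i T))"
      unfolding Ieq by (rule sum.Sigma) auto
    then show ?thesis by (simp add: w_def case_prod_beta')
  qed
  have var: "var_term M (\<lambda>\<omega>. cridge lam X n (\<lambda>t i. X t i \<bullet> \<beta> + \<epsilon> t i \<omega>) T) \<Sigma>0
           = \<sigma>\<^sup>2 * (\<Sum>t = 1..T. 1 / (lam t * real (n t)) *
               trace (mprod (A_mat lam X n) (rev [t+1..<T+1])
                      ** (A_mat lam X n t - A_mat lam X n t ** A_mat lam X n t)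
                      ** mprod (A_mat lam X n) [t+1..<T+1] ** \<Sigma>0))"
  proof -
    have "(\<Sum>k\<in>I. outer_prod (w k) (w k)) = (\<Sum>t=1..T. (1 / (lam t * real (n t))) *\<^sub>R
        (Q (t+1) T ** (AA t - AA t ** AA t) ** mprod AA [t+1..<T+1]))"
      unfolding sumI by (rule sum.cong) (auto simp: blk)
    then show ?thesis
      unfolding bh var_term_def cov
      by (simp add: mm_scale_l mm_sum_l trace_scale trace_sum' sum_distrib_left Q_def AA_def)
  qed
  show ?thesis using bias var by simp
qed

end
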